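(* Let $P=P_1\cdots P_p$ and $T=T_1\cdots T_t$ be strings over a finite alphabet $\Sigma$, and let $R^j(m_{r,i})$ be the bits computed by the GSM recurrence described in the context. Let $(r,i)$ be any pair with $r\in\{-1,0,1\}$, $i\in\{1,\dots,p\}$ and $(r,i)\notin\{(-1,1),(1,p)\}$, and let $j\in\{i,\dots,t\}$. If there exists a swap permutation $\pi$ for $P$ such that $(\pi(P))_{[1,i]}=T_{[j-i+1,j]}$ and $\pi(i)=i+r$, then $R^j(m_{r,i})=1$.
   Context: Strings: for a string $S$, $S_i$ is its $i$-th symbol and $S_{[i,j]}=S_iS_{i+1}\cdots S_j$. A swap permutation for a string $S$ of length $n$ is a permutation $\pi$ of $\{1,\dots,n\}$ such that (i) if $\pi(i)=j$ then $\pi(j)=i$; (ii) $\pi(i)\in\{i-1,i,i+1\}$ for all $i$; (iii) if $\pi(i)\neq i$ then $S_{\pi(i)}\neq S_i$. The swapped version is $\pi(S)=S_{\pi(1)}S_{\pi(2)}\cdots S_{\pi(n)}$. Bit vectors: all vectors below are elements of $\{0,1\}^p$ with entries indexed $1,\dots,p$; $\mid$ and $\&$ are bitwise OR and AND. $\mathit{LShift}(x)_1=0$ and $\mathit{LShift}(x)_i=x_{i-1}$ for $2\le i\le p$; $\mathit{RShift}(x)_i=x_{i+1}$ for $1\le i\le p-1$ and $\mathit{RShift}(x)_p=0$; $\mathit{LSO}(x)=\mathit{LShift}(x)\mid e_1$, where $e_1$ has a $1$ in entry $1$ and $0$ elsewhere. Masks: for $x\in\Sigma$, $D^x_i=1$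 iff $P_i=x$. GSM recurrence: $R_U^0=R_M^0=R_D^0=0^p$, and for $j=1,\dots,t$: $R_U'^{\,j}=\mathit{LSO}(R_D^{j-1})$, $R_M'^{\,j}=R_D'^{\,j}=\mathit{LSO}(R_M^{j-1}\mid R_U^{j-1})$, $R_U^{j}=R_U'^{\,j}\ \&\ \mathit{LShift}(D^{T_j})$, $R_M^{j}=R_M'^{\,j}\ \&\ D^{T_j}$, $R_D^{j}=R_D'^{\,j}\ \&\ \mathit{RShift}(D^{T_j})$. Notation: $R^j(m_{-1,i})=(R_U^j)_i$, $R^j(m_{0,i})=(R_M^j)_i$, $R^j(m_{1,i})=(R_D^j)_i$. *)

theory Defs
  imports Main
begin

text \<open>Strings are modelled as functions \<open>nat \<Rightarrow> 'a\<close> with a length;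
  only positions \<open>1..n\<close> are meaningful (1-based indexing as in the paper).
  Bit vectors in \<open>{0,1}^p\<close> are modelled as \<open>nat \<Rightarrow> bool\<close>, with entries
  \<open>1..p\<close> meaningful and all other entries False.\<close>

type_synonym bitvec = "nat \<Rightarrow> bool"

definition zerovec :: bitvec where
  "zerovec = (\<lambda>i. False)"

definition bor :: "bitvec \<Rightarrow> bitvec \<Rightarrow> bitvec" where
  "bor x y = (\<lambda>i. x i \<or> y i)"

definition band :: "bitvec \<Rightarrow> bitvec \<Rightarrow> bitvec" where
  "band x y = (\<lambda>i. x i \<and> y i)"

definition LShift :: "nat \<Rightarrow> bitvec \<Rightarrow> bitvec" where
  "LShift p x = (\<lambda>i. 2 \<le> i \<and> i \<le> p \<and> x (i - 1))"

definition RShift :: "nat \<Rightarrow> bitvec \<Rightarrow> bitvec" where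
  "RShift p x = (\<lambda>i. 1 \<le> i \<and> i + 1 \<le> p \<and> x (i + 1))"

definition e1 :: "nat \<Rightarrow> bitvec" where
  "e1 p = (\<lambda>i. i = 1 \<and> 1 \<le> p)"

definition LSO :: "nat \<Rightarrow> bitvec \<Rightarrow> bitvec" where
  "LSO p x = bor (LShift p x) (e1 p)"

definition mask :: "(nat \<Rightarrow> 'a) \<Rightarrow> nat \<Rightarrow> 'a \<Rightarrow> bitvec" where
  "mask P p x = (\<lambda>i. 1 \<le> i \<and> i \<le> p \<and> P i = x)"

text \<open>GSM recurrence: \<open>GSM P p T j = (R_U^j, R_M^j, R_D^j)\<close>.\<close>
fun GSM :: "(nat \<Rightarrow> 'a) \<Rightarrow> nat \<Rightarrow> (nat \<Rightarrow> 'a) \<Rightarrow> nat \<Rightarrow> bitvec \<times> bitvec \<times> bitvec" where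
  "GSM P p T 0 = (zerovec, zerovec, zerovec)"
| "GSM P p T (Suc j) =
     (let (RU, RM, RD) = GSM P p T j;
          RU' = LSO p RD;
          RM' = LSO p (bor RM RU);
          RD' = LSO p (bor RM RU);
          Dx = mask P p (T (Suc j))
      in (band RU' (LShift p Dx), band RM' Dx, band RD' (RShift p Dx)))"

text \<open>\<open>Rbit P p T j r i\<close> is \<open>R^j(m_{r,i})\<close>.\<close>
definition Rbit :: "(nat \<Rightarrow> 'a) \<Rightarrow> nat \<Rightarrow> (nat \<Rightarrow> 'a) \<Rightarrow> nat \<Rightarrow> int \<Rightarrow> nat \<Rightarrow> bool" where
  "Rbit P p T j r i =
     (case GSM P p T j of (RU, RM, RD) \<Rightarrow>
        (if r = -1 then RU i else if r = 0 then RM i else RD i))"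

definition swap_perm :: "(nat \<Rightarrow> 'a) \<Rightarrow> nat \<Rightarrow> (nat \<Rightarrow> nat) \<Rightarrow> bool" where
  "swap_perm S n \<pi> \<longleftrightarrow>
     bij_betw \<pi> {1..n} {1..n} \<and>
     (\<forall>i\<in>{1..n}. \<forall>j\<in>{1..n}. \<pi> i = j \<longrightarrow> \<pi> j = i) \<and>
     (\<forall>i\<in>{1..n}. \<pi> i = i - 1 \<or> \<pi> i = i \<or> \<pi> i = i + 1) \<and>
     (\<forall>i\<in>{1..n}. \<pi> i \<noteq> i \<longrightarrow> S (\<pi> i) \<noteq> S i)"

definition swapped :: "(nat \<Rightarrow> 'a) \<Rightarrow> (nat \<Rightarrow> nat) \<Rightarrow> nat \<Rightarrow> 'a" where
  "swapped S \<pi> = (\<lambda>k. S (\<pi> k))"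

end

theory Submission
  imports Defs
begin

lemma GSM_U: "fst (GSM P p T (Suc j)) i = (LSO p (snd (snd (GSM P p T j))) i \<and> LShift p (mask P p (T (Suc j))) i)"
  by (simp add: split_def Let_def band_def)
lemma GSM_M: "fst (snd (GSM P p T (Suc j))) i = (LSO p (bor (fst (snd (GSM P p T j))) (fst (GSM P p T j))) i \<and> mask P p (T (Suc j)) i)"
  by (simp add: split_def Let_def band_def)
lemma GSM_D: "snd (snd (GSM P p T (Suc j))) i = (LSO p (bor (fst (snd (GSM P p T j))) (fst (GSM P p T j))) i \<and> RShift p (mask P p (T (Suc j))) i)"
  by (simp add: split_def Let_def band_def)

declare GSM.simps(2)[simp del]

lemma key:
  fixes P T :: "nat \<Rightarrow> 'a"
  assumes sp: "swap_perm P p \<pi>"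
  shows "1 \<le> i \<Longrightarrow> i \<le> p \<Longrightarrow> i \<le> j \<Longrightarrow> (\<forall>k\<in>{1..i}. P (\<pi> k) = T (j - i + k)) \<Longrightarrow>
     (\<pi> i = i \<longrightarrow> fst (snd (GSM P p T j)) i) \<and>
     (\<pi> i = i + 1 \<longrightarrow> snd (snd (GSM P p T j)) i) \<and>
     (\<pi> i + 1 = i \<longrightarrow> fst (GSM P p T j) i)"
proof (induction i arbitrary: j)
  case 0 thus ?case by simp
next
  case (Suc m)
  from Suc.prems obtain j' where j: "j = Suc j'" by (cases j) auto
  have inv: "\<And>a b. a\<in>{1..p} \<Longrightarrow> b\<in>{1..p} \<Longrightarrow> \<pi> a = b \<Longrightarrow> \<pi> b = a"
    using sp unfolding swap_perm_def by blast
  have adj: "\<And>a. a\<in>{1..p} \<Longrightarrow> \<pi> a = a-1 \<or> \<pi> a = a \<or> \<pi> a = a+1"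
    using sp unfolding swap_perm_def by blast
  have rng: "\<And>a. a\<in>{1..p} \<Longrightarrow> \<pi> a \<in> {1..p}"
    using sp unfolding swap_perm_def bij_betw_def by blast
  have Tj: "P (\<pi> (Suc m)) = T j" using Suc.prems(3,4) by auto
  have pre: "fst (snd (GSM P p T j')) m \<or> fst (GSM P p T j') m"
    if m1: "m \<ge> 1" and ne: "\<pi> m \<noteq> Suc m"
  proof -
    have hyp: "\<forall>k\<in>{1..m}. P (\<pi> k) = T (j' - m + k)"
    proof
      fix k assume k: "k \<in> {1..m}"
      hence "P (\<pi> k) = T (j - Suc m + k)" using Suc.prems(4) by auto
      moreover have "j - Suc m + k = j' - m + k" using j by simp
      ultimately show "P (\<pi> k) = T (j' - m + k)" by simp
    qed
    have IH: "(\<pi> m = m \<longrightarrow> fst (snd (GSM P p T j')) m) \<and>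
     (\<pi> m = m + 1 \<longrightarrow> snd (snd (GSM P p T j')) m) \<and>
     (\<pi> m + 1 = m \<longrightarrow> fst (GSM P p T j') m)"
      using Suc.IH[OF m1 _ _ hyp] Suc.prems j by auto
    have "\<pi> m \<in> {1..p}" using rng m1 Suc.prems by auto
    moreover have "\<pi> m = m-1 \<or> \<pi> m = m" using adj[of m] m1 Suc.prems ne by auto
    ultimately have "\<pi> m = m \<or> \<pi> m + 1 = m" by auto
    thus ?thesis using IH by auto
  qed
  have pim: "\<pi> m \<noteq> Suc m" if "m \<ge> 1" "\<pi> (Suc m) \<noteq> m"
    using inv[of m "Suc m"] that Suc.prems by auto
  show ?case
  proof (intro conjI impI)
    assume h: "\<pi> (Suc m) = Suc m"
    show "fst (snd (GSM P p T j)) (Suc m)"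
    proof (cases "m = 0")
      case True thus ?thesis using j h Tj Suc.prems
        by (simp add: GSM_M LSO_def bor_def e1_def Defs.mask_def)
    next
      case False
      hence "fst (snd (GSM P p T j')) m \<or> fst (GSM P p T j') m" using pre pim h by auto
      thus ?thesis using j h Tj Suc.prems False
        by (auto simp add: GSM_M LSO_def bor_def e1_def Defs.mask_def LShift_def)
    qed
  next
    assume h: "\<pi> (Suc m) = Suc m + 1"
    have sp1: "Suc m + 1 \<le> p" using rng[of "Suc m"] h Suc.prems by auto
    show "snd (snd (GSM P p T j)) (Suc m)"
    proof (cases "m = 0")
      case True thus ?thesis using j h Tj Suc.prems sp1
        by (simp add: GSM_D LSO_def bor_def e1_def Defs.mask_def RShift_def)
    next
      case False
      hence "fst (snd (GSM P p T j')) m \<or> fst (GSM P p T j') m" using pre pim h by auto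
      thus ?thesis using j h Tj Suc.prems False sp1
        by (auto simp add: GSM_D LSO_def bor_def e1_def Defs.mask_def LShift_def RShift_def)
    qed
  next
    assume h: "\<pi> (Suc m) + 1 = Suc m"
    hence pm: "\<pi> (Suc m) = m" by simp
    have m1: "m \<ge> 1" using rng[of "Suc m"] pm Suc.prems by auto
    have pm2: "\<pi> m = m + 1" using inv[of "Suc m" m] pm m1 Suc.prems by auto
    have hyp: "\<forall>k\<in>{1..m}. P (\<pi> k) = T (j' - m + k)"
    proof
      fix k assume k: "k \<in> {1..m}"
      hence "P (\<pi> k) = T (j - Suc m + k)" using Suc.prems(4) by auto
      moreover have "j - Suc m + k = j' - m + k" using j by simp
      ultimately show "P (\<pi> k) = T (j' - m + k)" by simp
    qed
    have "snd (snd (GSM P p T j')) m"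
      using Suc.IH[OF m1 _ _ hyp] Suc.prems j pm2 by auto
    thus "fst (GSM P p T j) (Suc m)" using j pm Tj Suc.prems m1
      by (auto simp add: GSM_U LSO_def bor_def e1_def Defs.mask_def LShift_def)
  qed
qed

theorem mainTheorem1:
  fixes P T :: "nat \<Rightarrow> 'a::finite" and p t :: nat and r :: int and i j :: nat
  assumes "r \<in> {-1, 0, 1}" and "i \<in> {1..p}"
    and "(r, i) \<notin> {(-1, 1), (1, p)}"
    and "j \<in> {i..t}"
    and "\<exists>\<pi>. swap_perm P p \<pi> \<and>
           (\<forall>k\<in>{1..i}. swapped P \<pi> k = T (j - i + k)) \<and>
           int (\<pi> i) = int i + r"
  shows "Rbit P p T j r i"
proof -
  obtain \<pi> where sp: "swap_perm P p \<pi>" and m: "\<forall>k\<in>{1..i}. P (\<pi> k) = T (j - i + k)"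
    and e: "int (\<pi> i) = int i + r" using assms(5) unfolding swapped_def by auto
  note K = key[OF sp, of i j T]
  have K': "(\<pi> i = i \<longrightarrow> fst (snd (GSM P p T j)) i) \<and>
     (\<pi> i = i + 1 \<longrightarrow> snd (snd (GSM P p T j)) i) \<and>
     (\<pi> i + 1 = i \<longrightarrow> fst (GSM P p T j) i)" using K assms(2,4) m by auto
  show ?thesis using assms(1) e K' unfolding Rbit_def
    by (auto simp add: split_def)
qed

end
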